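(* Let $Q_1,\dots,Q_4$ be quaternion division algebras over $F$ with $g_{ij},h_i,d\ge2$ for all indices, and $X=\prod_{i=1}^4\mathrm{SB}(Q_i)$. Let $1\le m\le3$, and let $i,j,k,l$ be such that $\{i,j,k,l\}=\{1,2,3,4\}$. Then: (1) If $d=2$ then $2\sum_{1\le p<q\le4}y_py_q\in\mathrm{Im}(\mathrm{res}^{2/3})$. If $h_l=2$ then $2(y_iy_j+y_iy_k+y_jy_k)\in\mathrm{Im}(\mathrm{res}^{2/3})$. (2) If $g_{ij}=2$ then $4y_iy_jy_k,4y_iy_jy_l\in\mathrm{Im}(\mathrm{res}^{3/4})$. If $h_l=2$ then $4y_iy_jy_k$ and $-4y_iy_jy_k+4\sum_{1\le p<q<r\le4}y_py_qy_r$ lie in $\mathrm{Im}(\mathrm{res}^{3/4})$. If $g_{ij}=g_{ik}=2$ then $4y_iy_jy_k,4y_iy_jy_l,4y_iy_ky_l\in\mathrm{Im}(\mathrm{res}^{3/4})$. If $d=2$, or $|G|\ge4$, or $|G\cap J_m|=2$ for some $m$, or $|G\cap K_i|=3$ for some $i$, then $4y_py_qy_r\in\mathrm{Im}(\mathrm{res}^{3/4})$ for all $1\le p<q<r\le4$. (3) If $d\in\{2,4\}$, or $|G|\ge1$, or $|H_2|\ge1$, then $8y_1y_2y_3y_4\in\Gamma^4(X)$. If $|G\cap J_m|=2$ for some $m$, then $4y_1y_2y_3y_4\in\Gamma^4(X)$.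
   Context: Let $Q_1,\dots,Q_4$ be quaternion algebras over a field $F$, $X=\prod_{i=1}^4\mathrm{SB}(Q_i)$, and $E$ a splitting field. Then $K(X_E)=\mathbb Z[x_1,\dots,x_4]/((x_1-1)^2,\dots,(x_4-1)^2)$, where $x_i$ is the pullback of the class of the tautological line bundle on the $i$-th projective line, and the restriction $K(X)\to K(X_E)$ is injective; we identify $K(X)$ with its image, which has $\mathbb Z$-basis $\{\operatorname{ind}(Q_1^{\otimes i_1}\otimes\cdots\otimes Q_4^{\otimes i_4})x_1^{i_1}\cdots x_4^{i_4}:0\le i_j\le1\}$. Put $y_i=x_i-1$. The gamma filtration $\Gamma^d$ is generated by products $\gamma_{d_1}(x_1)\cdots\gamma_{d_r}(x_r)$ with $x_s$ of rank $0$ and $\sum d_s\ge d$; $\Gamma^d(X_E)$ is spanned by monomials in the $y_i$ of degree $\ge d$, and $\mathrm{res}^{d/d+1}:\Gamma^{d/d+1}(X)\to\Gamma^{d/d+1}(X_E)$ is the induced map on quotients; a homogeneous degree-$d$ polynomial in the $y_i$ is said to lie in $\mathrm{Im}(\mathrm{res}^{d/d+1})$ if its class in $\Gamma^{d/d+1}(X_E)$ does. Notation: $g_{ij}=\operatorname{ind}(Q_i\otimes Q_j)$; $h_i=\operatorname{ind}(Q_j\otimes Q_k\otimes Q_l)$ where $\{i,j,k,l\}=\{1,2,3,4\}$; $d=\operatorname{ind}(Q_1\otimes Q_2\otimes Q_3\otimes Q_4)$; $H_m=\{i:h_i=m\}$; $J=\{12,13,14,23,24,34\}$ the set of index pairs;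 $J_1=\{12,34\}$, $J_2=\{13,24\}$, $J_3=\{14,23\}$; $K_i=\{jk,jl,kl\}$ where $\{j,k,l\}=\{1,2,3,4\}\setminus\{i\}$; $G=\{ij\in J: g_{ij}=2\}$. *)

theory Defs
  imports Main
begin

text \<open>Concrete model of K(X_E) = Z[x_1..x_4]/((x_i-1)^2) with y_i = x_i - 1.
  An element is stored by its coefficients in the Z-basis of squarefree
  y-monomials y^T (T a subset of {1,2,3,4}); y_i^2 = 0.\<close>

type_synonym kel = "nat set \<Rightarrow> int"

definition idx4 :: "nat set" where "idx4 = {1,2,3,4}"

definition kzero :: kel where "kzero = (\<lambda>T. 0)"
definition kone :: kel where "kone = (\<lambda>T. if T = {} then 1 else 0)"
definition kadd :: "kel \<Rightarrow> kel \<Rightarrow> kel" where "kadd f g = (\<lambda>T. f T + g T)"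
definition kneg :: "kel \<Rightarrow> kel" where "kneg f = (\<lambda>T. - f T)"
definition ksmul :: "int \<Rightarrow> kel \<Rightarrow> kel" where "ksmul c f = (\<lambda>T. c * f T)"

text \<open>Multiplication: y^A * y^B = y^(A \<union> B) if A, B disjoint, and 0 otherwise.\<close>
definition kmul :: "kel \<Rightarrow> kel \<Rightarrow> kel" where
  "kmul f g = (\<lambda>T. \<Sum>A\<in>Pow T. f A * g (T - A))"

fun kpow :: "kel \<Rightarrow> nat \<Rightarrow> kel" where
  "kpow u 0 = kone"
| "kpow u (Suc k) = kmul u (kpow u k)"

text \<open>The monomial y^S, and x^S = prod_{i in S} x_i = prod_{i in S} (1 + y_i).\<close>
definition ymon :: "nat set \<Rightarrow> kel" where "ymon S = (\<lambda>T. if T = S then 1 else 0)"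
definition xmon :: "nat set \<Rightarrow> kel" where "xmon S = (\<lambda>T. if T \<subseteq> S then 1 else 0)"

definition esym :: "nat \<Rightarrow> kel" where
  "esym k = (\<lambda>T. if T \<subseteq> idx4 \<and> card T = k then 1 else 0)"

definition xcomb :: "(nat set \<Rightarrow> int) \<Rightarrow> kel" where
  "xcomb n = (\<lambda>T. \<Sum>S\<in>Pow idx4. n S * xmon S T)"

definition rank_x :: "(nat set \<Rightarrow> int) \<Rightarrow> int" where
  "rank_x n = (\<Sum>S\<in>Pow idx4. n S)"

text \<open>Formal power series in t with coefficients in K(X_E).\<close>
type_synonym kps = "nat \<Rightarrow> kel"

definition ps_one :: kps where "ps_one = (\<lambda>k. if k = 0 then kone else kzero)"
definition ps_mul :: "kps \<Rightarrow> kps \<Rightarrow> kps" where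
  "ps_mul P Q = (\<lambda>n T. \<Sum>k\<le>n. kmul (P k) (Q (n - k)) T)"

text \<open>(1 + u t)^m for an integer m (u nilpotent), via generalized binomial coefficients
  (ibinom m k = m(m-1)...(m-k+1)/k!, an exact division).\<close>
definition ibinom :: "int \<Rightarrow> nat \<Rightarrow> int" where
  "ibinom m k = (\<Prod>i<k. m - int i) div fact k"

definition binom_ps :: "kel \<Rightarrow> int \<Rightarrow> kps" where
  "binom_ps u m = (\<lambda>k. ksmul (ibinom m k) (kpow u k))"

definition subsets4 :: "nat set list" where
  "subsets4 = map set (subseqs [1,2,3,4])"

text \<open>Gamma series of a rank-zero element a = sum_S n(S) x^S = sum_S n(S) (x^S - 1):
  gamma_t(a) = prod_S gamma_t(x^S - 1)^(n S), with gamma_t(L - 1) = 1 + (L - 1) t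
  for a line bundle L (x^S is a line bundle class).\<close>
definition gamma_ps :: "(nat set \<Rightarrow> int) \<Rightarrow> kps" where
  "gamma_ps n = foldr ps_mul
     (map (\<lambda>S. binom_ps (kadd (xmon S) (kneg kone)) (n S)) subsets4) ps_one"

definition gamma_op :: "nat \<Rightarrow> (nat set \<Rightarrow> int) \<Rightarrow> kel" where
  "gamma_op k n = gamma_ps n k"

text \<open>ind S = ind of the tensor product of Q_i, i in S. Elements of K(X) are
  sum_S c(S) ind(S) x^S; their x-coordinates are given by kx_coords.\<close>
definition kx_coords :: "(nat set \<Rightarrow> nat) \<Rightarrow> (nat set \<Rightarrow> int) \<Rightarrow> (nat set \<Rightarrow> int)" where
  "kx_coords ind c = (\<lambda>S. c S * int (ind S))"

definition in_KX :: "(nat set \<Rightarrow> nat) \<Rightarrow> kel \<Rightarrow> bool" where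
  "in_KX ind a \<longleftrightarrow> (\<exists>c. a = xcomb (kx_coords ind c))"

text \<open>Gamma filtration Gamma^d(X): the subgroup generated by products
  gamma_{d_1}(a_1) ... gamma_{d_r}(a_r), a_s in K(X) of rank 0, sum d_s \<ge> d.
  A factor is given as (c, d_s) where c are the K(X)-coordinates of a_s.\<close>
definition gamma_prod :: "(nat set \<Rightarrow> nat) \<Rightarrow> ((nat set \<Rightarrow> int) \<times> nat) list \<Rightarrow> kel" where
  "gamma_prod ind fs = foldr (\<lambda>(c, k) acc. kmul (gamma_op k (kx_coords ind c)) acc) fs kone"

inductive_set gamma_filt :: "(nat set \<Rightarrow> nat) \<Rightarrow> nat \<Rightarrow> kel set"
  for ind :: "nat set \<Rightarrow> nat" and d :: nat where
  zero: "kzero \<in> gamma_filt ind d"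
| gen: "\<lbrakk>\<forall>(c, k) \<in> set fs. rank_x (kx_coords ind c) = 0; d \<le> (\<Sum>(c, k)\<leftarrow>fs. k)\<rbrakk>
        \<Longrightarrow> gamma_prod ind fs \<in> gamma_filt ind d"
| add: "\<lbrakk>a \<in> gamma_filt ind d; b \<in> gamma_filt ind d\<rbrakk> \<Longrightarrow> kadd a b \<in> gamma_filt ind d"
| neg: "a \<in> gamma_filt ind d \<Longrightarrow> kneg a \<in> gamma_filt ind d"

text \<open>Gamma^d(X_E) is spanned by y-monomials of degree \<ge> d. A homogeneous degree-d
  polynomial P lies in Im(res^{d/d+1}) iff some z in Gamma^d(X) satisfies
  z - P in Gamma^{d+1}(X_E).\<close>
definition in_GammaE :: "nat \<Rightarrow> kel \<Rightarrow> bool" where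
  "in_GammaE d f \<longleftrightarrow> (\<forall>T. card T < d \<longrightarrow> f T = 0)"

definition in_im_res :: "(nat set \<Rightarrow> nat) \<Rightarrow> nat \<Rightarrow> kel \<Rightarrow> bool" where
  "in_im_res ind d P \<longleftrightarrow> (\<exists>z \<in> gamma_filt ind d. in_GammaE (Suc d) (kadd z (kneg P)))"

text \<open>Index data: g_ij = ind {i,j}, h_l = ind (idx4 - {l}), d = ind idx4.\<close>
definition Jset :: "nat set set" where "Jset = {P. P \<subseteq> idx4 \<and> card P = 2}"
definition J1 :: "nat set set" where "J1 = {{1,2},{3,4}}"
definition J2 :: "nat set set" where "J2 = {{1,3},{2,4}}"
definition J3 :: "nat set set" where "J3 = {{1,4},{2,3}}"
definition Jm :: "nat \<Rightarrow> nat set set" where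
  "Jm m = (if m = 1 then J1 else if m = 2 then J2 else J3)"
definition Kset :: "nat \<Rightarrow> nat set set" where "Kset i = {P \<in> Jset. i \<notin> P}"
definition Gset :: "(nat set \<Rightarrow> nat) \<Rightarrow> nat set set" where
  "Gset ind = {P \<in> Jset. ind P = 2}"
definition Hset :: "(nat set \<Rightarrow> nat) \<Rightarrow> nat \<Rightarrow> nat set" where
  "Hset ind m = {i \<in> idx4. ind (idx4 - {i}) = m}"

text \<open>Index data arising from four quaternion division algebras with g, h, d \<ge> 2:
  the known constraints (Brauer classes of order 2, so [Q^S][Q^T] = [Q^(S \<triangle> T)]).\<close>
definition quat_index_data :: "(nat set \<Rightarrow> nat) \<Rightarrow> bool" where
  "quat_index_data ind \<longleftrightarrow>
     ind {} = 1 \<and>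
     (\<forall>i \<in> idx4. ind {i} = 2) \<and>
     (\<forall>S \<subseteq> idx4. (\<exists>e. ind S = 2 ^ e) \<and> ind S dvd 2 ^ card S) \<and>
     (\<forall>S \<subseteq> idx4. \<forall>T \<subseteq> idx4. ind ((S - T) \<union> (T - S)) dvd ind S * ind T)"

end

theory Submission
  imports Defs
begin


definition zz :: "nat set \<Rightarrow> kel" where "zz S = kadd (xmon S) (kneg kone)"
definition nel :: "nat set \<Rightarrow> int \<Rightarrow> (nat set \<Rightarrow> int)" where
  "nel S0 m = (\<lambda>S. if S = S0 then m else if S = {} then -m else 0)"
definition cel :: "(nat set \<Rightarrow> nat) \<Rightarrow> nat set \<Rightarrow> int \<Rightarrow> (nat set \<Rightarrow> int)" where
  "cel ind S0 t = (\<lambda>S. if S = S0 then t else if S = {} then - t * int (ind S0) else 0)"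
definition fin0 :: "kel \<Rightarrow> bool" where "fin0 f \<longleftrightarrow> (\<forall>T. infinite T \<longrightarrow> f T = 0)"
definition good_on :: "nat set \<Rightarrow> kel \<Rightarrow> bool" where "good_on A f \<longleftrightarrow> (\<forall>T. \<not> T \<subseteq> A \<longrightarrow> f T = 0)"

lemma kmul_empty: "kmul f g {} = f {} * g {}"
  by (simp add: kmul_def)

lemma kmul_insert:
  assumes "finite A" "a \<notin> A"
  shows "kmul f g (insert a A) = kmul f (\<lambda>B. g (insert a B)) A + kmul (\<lambda>B. f (insert a B)) g A"
proof -
  have d: "Pow A \<inter> insert a ` Pow A = {}" using assms by auto
  have inj: "inj_on (insert a) (Pow A)" using assms unfolding inj_on_def
    by (metis Pow_iff insert_absorb insert_ident subset_iff)
  have "kmul f g (insert a A) = (\<Sum>B\<in>Pow A. f B * g (insert a A - B)) + (\<Sum>B\<in>insert a ` Pow A. f B * g (insert a A - B))"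
    unfolding kmul_def Pow_insert using d assms by (simp add: sum.union_disjoint)
  also have "(\<Sum>B\<in>Pow A. f B * g (insert a A - B)) = (\<Sum>B\<in>Pow A. f B * g (insert a (A - B)))"
    by (rule sum.cong) (use assms in \<open>auto simp: insert_Diff_if\<close>)
  also have "(\<Sum>B\<in>insert a ` Pow A. f B * g (insert a A - B)) = (\<Sum>C\<in>Pow A. f (insert a C) * g (insert a A - insert a C))"
    by (simp add: sum.reindex[OF inj])
  also have "\<dots> = (\<Sum>C\<in>Pow A. f (insert a C) * g (A - C))"
    by (rule sum.cong) (use assms in auto)
  finally show ?thesis by (simp add: kmul_def)
qed

lemma kmul_inf: "infinite T \<Longrightarrow> kmul f g T = 0"
  by (simp add: kmul_def)

lemma fin0_kmul: "fin0 (kmul f g)" by (simp add: fin0_def kmul_inf)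
lemma fin0_kone: "fin0 kone" by (auto simp: fin0_def kone_def)
lemma fin0_kzero: "fin0 kzero" by (auto simp: fin0_def kzero_def)
lemma fin0_ksmul: "fin0 f \<Longrightarrow> fin0 (ksmul c f)" by (auto simp: fin0_def ksmul_def)
lemma fin0_kpow: "fin0 (kpow u k)" by (cases k) (auto simp: fin0_kone fin0_kmul)

lemma kmul_kone_left: "fin0 f \<Longrightarrow> kmul kone f = f"
proof
  fix T assume f: "fin0 f"
  show "kmul kone f T = f T"
  proof (cases "finite T")
    case True
    have "kmul kone f T = (\<Sum>B\<in>Pow T. if B = {} then f (T - B) else 0)"
      unfolding kmul_def kone_def by (rule sum.cong) auto
    also have "\<dots> = f T" using True by (simp add: sum.delta)
    finally show ?thesis .
  next
    case False thus ?thesis using f by (simp add: fin0_def kmul_inf)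
  qed
qed

lemma kmul_kone_right: "fin0 f \<Longrightarrow> kmul f kone = f"
proof
  fix T assume f: "fin0 f"
  show "kmul f kone T = f T"
  proof (cases "finite T")
    case True
    have "kmul f kone T = (\<Sum>B\<in>Pow T. if B = T then f B else 0)"
      unfolding kmul_def kone_def by (rule sum.cong) auto
    also have "\<dots> = f T" using True by (simp add: sum.delta)
    finally show ?thesis .
  next
    case False thus ?thesis using f by (simp add: fin0_def kmul_inf)
  qed
qed

lemma kmul_kzero_left: "kmul kzero f = kzero" by (simp add: kmul_def kzero_def fun_eq_iff)
lemma kmul_kzero_right: "kmul f kzero = kzero" by (simp add: kmul_def kzero_def fun_eq_iff)
lemma kmul_z_left: "kmul (\<lambda>T. 0) f = (\<lambda>T. 0)" by (simp add: kmul_def fun_eq_iff)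
lemma kmul_z_right: "kmul f (\<lambda>T. 0) = (\<lambda>T. 0)" by (simp add: kmul_def fun_eq_iff)

lemma fin0_ps_one: "fin0 (ps_one k)" by (simp add: ps_one_def fin0_kone fin0_kzero)

lemma ps_mul_one_left: "(\<And>k. fin0 (Q k)) \<Longrightarrow> ps_mul ps_one Q = Q"
proof (intro ext)
  fix n T assume q: "\<And>k. fin0 (Q k)"
  have "ps_mul ps_one Q n T = (\<Sum>k\<le>n. if k = 0 then kmul kone (Q (n - k)) T else 0)"
    unfolding ps_mul_def ps_one_def by (rule sum.cong) (auto simp: kmul_z_left kzero_def)
  also have "\<dots> = Q n T" using q by (simp add: sum.delta kmul_kone_left)
  finally show "ps_mul ps_one Q n T = Q n T" .
qed

lemma ps_mul_one_right: "(\<And>k. fin0 (Q k)) \<Longrightarrow> ps_mul Q ps_one = Q"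
proof (intro ext)
  fix n T assume q: "\<And>k. fin0 (Q k)"
  have "ps_mul Q ps_one n T = (\<Sum>k\<le>n. if k = n then kmul (Q k) kone T else 0)"
    unfolding ps_mul_def ps_one_def by (rule sum.cong) (auto simp: kmul_z_right kzero_def)
  also have "\<dots> = Q n T" using q by (simp add: sum.delta kmul_kone_right)
  finally show "ps_mul Q ps_one n T = Q n T" .
qed

lemma foldr_none: "(\<And>x. x \<in> set xs \<Longrightarrow> F x = ps_one) \<Longrightarrow> foldr ps_mul (map F xs) ps_one = ps_one"
  by (induction xs) (auto simp: ps_mul_one_left fin0_ps_one)

lemma foldr_single:
  assumes "distinct xs" "y \<in> set xs" "\<And>x. x \<in> set xs \<Longrightarrow> x \<noteq> y \<Longrightarrow> F x = ps_one"
    "\<And>k. fin0 (F y k)"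
  shows "foldr ps_mul (map F xs) ps_one = F y"
  using assms
proof (induction xs)
  case Nil then show ?case by simp
next
  case (Cons x xs)
  show ?case
  proof (cases "x = y")
    case True
    then have "foldr ps_mul (map F xs) ps_one = ps_one"
      using Cons.prems by (intro foldr_none) auto
    then show ?thesis using True Cons.prems by (simp add: ps_mul_one_right)
  next
    case False
    then have "foldr ps_mul (map F xs) ps_one = F y"
      using Cons by auto
    then show ?thesis using False Cons.prems by (simp add: ps_mul_one_left)
  qed
qed

lemma ibinom_0: "ibinom m 0 = 1" by (simp add: ibinom_def)
lemma ibinom_zero: "k > 0 \<Longrightarrow> ibinom 0 k = 0"
  unfolding ibinom_def by (subst prod_zero) (auto intro!: bexI[where x=0])

lemma binom_ps_zero: "binom_ps u 0 = ps_one"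
  by (auto simp: binom_ps_def ps_one_def ibinom_0 ibinom_zero ksmul_def kzero_def fun_eq_iff)

lemma kpow_kzero: "k > 0 \<Longrightarrow> kpow kzero k = kzero"
  by (cases k) (auto simp: kmul_kzero_left)

lemma zz_empty: "zz {} = kzero"
  by (auto simp: zz_def kadd_def xmon_def kneg_def kone_def kzero_def fun_eq_iff)

lemma binom_ps_kzero: "binom_ps kzero m = ps_one"
proof (intro ext)
  fix k T show "binom_ps kzero m k T = ps_one k T"
    by (cases "k = 0") (simp_all add: binom_ps_def ps_one_def ibinom_0 kpow_kzero ksmul_def, simp_all add: kzero_def)
qed

lemma fin0_binom: "fin0 (binom_ps u m k)"
  by (simp add: binom_ps_def fin0_ksmul fin0_kpow)

lemma subsets4_set: "set subsets4 = Pow idx4"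
  unfolding subsets4_def idx4_def using subseqs_powset[of "[1,2,3,4::nat]"] by simp

lemma subsets4_distinct: "distinct subsets4"
  unfolding subsets4_def by (rule distinct_set_subseqs) simp

lemma gamma_nel:
  assumes "S0 \<subseteq> idx4" "S0 \<noteq> {}"
  shows "gamma_op k (nel S0 m) = ksmul (ibinom m k) (kpow (zz S0) k)"
proof -
  have "gamma_ps (nel S0 m) = binom_ps (zz S0) m"
    unfolding gamma_ps_def
    apply (subst foldr_single[where y=S0])
    using assms subsets4_distinct subsets4_set
    by (auto simp: nel_def binom_ps_zero zz_def[symmetric] zz_empty binom_ps_kzero fin0_binom)
  then show ?thesis by (simp add: gamma_op_def binom_ps_def)
qed

lemma rank_nel: "S0 \<subseteq> idx4 \<Longrightarrow> S0 \<noteq> {} \<Longrightarrow> rank_x (nel S0 m) = 0"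
proof -
  assume a: "S0 \<subseteq> idx4" "S0 \<noteq> {}"
  have "rank_x (nel S0 m) = (\<Sum>S\<in>Pow idx4. (if S = S0 then m else 0) + (if S = {} then -m else 0))"
    unfolding rank_x_def nel_def by (rule sum.cong) (use a in auto)
  also have "\<dots> = 0" using a by (simp add: sum.distrib sum.delta idx4_def)
  finally show ?thesis .
qed

lemma kx_cel: "ind {} = 1 \<Longrightarrow> S0 \<noteq> {} \<Longrightarrow> kx_coords ind (cel ind S0 t) = nel S0 (t * int (ind S0))"
  by (auto simp: kx_coords_def cel_def nel_def fun_eq_iff)

lemma good_kmul: "good_on A f \<Longrightarrow> good_on A g \<Longrightarrow> good_on A (kmul f g)"
  unfolding good_on_def kmul_def
proof (intro allI impI)
  fix T assume f: "\<forall>T. \<not> T \<subseteq> A \<longrightarrow> f T = 0" and g: "\<forall>T. \<not> T \<subseteq> A \<longrightarrow> g T = 0" and T: "\<not> T \<subseteq> A"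
  then obtain x where x: "x \<in> T" "x \<notin> A" by auto
  show "(\<Sum>B\<in>Pow T. f B * g (T - B)) = 0"
  proof (rule sum.neutral, intro ballI)
    fix B assume "B \<in> Pow T"
    show "f B * g (T - B) = 0"
    proof (cases "x \<in> B")
      case True then show ?thesis using f x by auto
    next
      case False
      then have "\<not> T - B \<subseteq> A" using x by auto
      then show ?thesis using g by simp
    qed
  qed
qed

lemma good_kone: "good_on A kone" by (auto simp: good_on_def kone_def)
lemma good_zz: "S \<subseteq> A \<Longrightarrow> good_on A (zz S)" by (auto simp: good_on_def zz_def kadd_def kneg_def xmon_def kone_def)
lemma good_ymon: "S \<subseteq> A \<Longrightarrow> good_on A (ymon S)" by (auto simp: good_on_def ymon_def)
lemma good_esym: "idx4 \<subseteq> A \<Longrightarrow> good_on A (esym n)" by (auto simp: good_on_def esym_def)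
lemma good_kadd: "good_on A f \<Longrightarrow> good_on A g \<Longrightarrow> good_on A (kadd f g)" by (auto simp: good_on_def kadd_def)
lemma good_kneg: "good_on A f \<Longrightarrow> good_on A (kneg f)" by (auto simp: good_on_def kneg_def)
lemma good_ksmul: "good_on A f \<Longrightarrow> good_on A (ksmul c f)" by (auto simp: good_on_def ksmul_def)
lemma good_kpow: "good_on A f \<Longrightarrow> good_on A (kpow f n)" by (induction n) (auto simp: good_kone good_kmul)
lemmas good_intros = good_kmul good_kone good_zz good_ymon good_esym good_kadd good_kneg good_ksmul good_kpow

lemma eq_by_enum: "good_on A f \<Longrightarrow> good_on A g \<Longrightarrow> (\<forall>T. T \<subseteq> A \<longrightarrow> f T = g T) \<Longrightarrow> f = g"
  unfolding good_on_def by (metis ext)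

lemma gammaE_by_enum: "good_on A f \<Longrightarrow> (\<forall>T. T \<subseteq> A \<longrightarrow> card T < d \<longrightarrow> f T = 0) \<Longrightarrow> in_GammaE d f"
  unfolding good_on_def in_GammaE_def by metis

lemma all_sub_insert: "(\<forall>T. T \<subseteq> insert a A \<longrightarrow> P T) \<longleftrightarrow> (\<forall>T. T \<subseteq> A \<longrightarrow> P T \<and> P (insert a T))"
proof
  assume h: "\<forall>T. T \<subseteq> insert a A \<longrightarrow> P T"
  show "\<forall>T. T \<subseteq> A \<longrightarrow> P T \<and> P (insert a T)" using h by blast
next
  assume h: "\<forall>T. T \<subseteq> A \<longrightarrow> P T \<and> P (insert a T)"
  show "\<forall>T. T \<subseteq> insert a A \<longrightarrow> P T"
  proof (intro allI impI)
    fix T assume T: "T \<subseteq> insert a A"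
    show "P T"
    proof (cases "a \<in> T")
      case True
      then have "T = insert a (T - {a})" by auto
      moreover have "T - {a} \<subseteq> A" using T by auto
      ultimately show ?thesis using h by metis
    next
      case False then show ?thesis using h T by auto
    qed
  qed
qed

lemma all_sub_empty: "(\<forall>T. T \<subseteq> {} \<longrightarrow> P T) \<longleftrightarrow> P {}" by auto

lemma ksmul_ap: "ksmul c f T = c * f T" by (simp add: ksmul_def)
lemma kadd_ap: "kadd f g T = f T + g T" by (simp add: kadd_def)
lemma kneg_ap: "kneg f T = - f T" by (simp add: kneg_def)
lemma kone_ap: "kone T = (if T = {} then 1 else 0)" by (simp add: kone_def)
lemma zz_ap: "zz S T = (if T \<subseteq> S \<and> T \<noteq> {} then 1 else 0)" by (simp add: zz_def kadd_def kneg_def xmon_def kone_def)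
lemma ymon_ap: "ymon S T = (if T \<subseteq> S \<and> S \<subseteq> T then 1 else 0)" by (auto simp: ymon_def)
lemma esym_ap: "esym n T = (if T \<subseteq> idx4 \<and> card T = n then 1 else 0)" by (simp add: esym_def)
lemma kpow_num: "kpow u (numeral n) = kmul u (kpow u (pred_numeral n))" by (simp add: numeral_eq_Suc)
lemma kpow_1: "kpow u 1 = kmul u kone" by simp
lemma kmul_ins: "a \<notin> A \<Longrightarrow> finite A \<Longrightarrow> kmul f g (insert a A) = kmul f (\<lambda>B. g (insert a B)) A + kmul (\<lambda>B. f (insert a B)) g A"
  by (rule kmul_insert)

lemmas ev = kmul_empty kmul_ins ksmul_ap kadd_ap kneg_ap kone_ap zz_ap ymon_ap esym_ap

definition gp :: "(nat set \<Rightarrow> nat) \<Rightarrow> (nat set \<times> int \<times> nat) list \<Rightarrow> kel" where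
  "gp ind fs = gamma_prod ind (map (\<lambda>(S,t,k). (cel ind S t, k)) fs)"

lemma gp_mem:
  assumes "ind {} = 1" "\<forall>(S,t,k) \<in> set fs. S \<subseteq> idx4 \<and> S \<noteq> {}" "d \<le> (\<Sum>(S,t,k)\<leftarrow>fs. k)"
  shows "gp ind fs \<in> gamma_filt ind d"
  unfolding gp_def
proof (rule gamma_filt.gen)
  show "\<forall>(c, k)\<in>set (map (\<lambda>(S, t, k). (cel ind S t, k)) fs). rank_x (kx_coords ind c) = 0"
  proof -
    have h: "\<And>S t k. (S,t,k) \<in> set fs \<Longrightarrow> S \<subseteq> idx4 \<and> S \<noteq> {}" using assms(2) by auto
    have r: "\<And>S t. S \<subseteq> idx4 \<Longrightarrow> S \<noteq> {} \<Longrightarrow> rank_x (kx_coords ind (cel ind S t)) = 0"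
      by (simp add: kx_cel[of ind, OF assms(1)] rank_nel)
    show ?thesis
    proof (intro ballI)
      fix y assume "y \<in> set (map (\<lambda>(S, t, k). (cel ind S t, k)) fs)"
      then obtain S t k where "(S,t,k) \<in> set fs" "y = (cel ind S t, k)" by auto
      then show "case y of (c, k) \<Rightarrow> rank_x (kx_coords ind c) = 0" using h r by auto
    qed
  qed
  have "(\<Sum>(c, k)\<leftarrow>map (\<lambda>(S, t, k). (cel ind S t, k)) fs. k) = (\<Sum>(S,t,k)\<leftarrow>fs. k)"
    by (induction fs) auto
  then show "d \<le> (\<Sum>(c, k)\<leftarrow>map (\<lambda>(S, t, k). (cel ind S t, k)) fs. k)" using assms(3) by simp
qed

lemma gp_eval:
  assumes "ind {} = 1" "\<forall>(S,t,k) \<in> set fs. S \<subseteq> idx4 \<and> S \<noteq> {}"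
  shows "gp ind fs = foldr (\<lambda>(S,t,k) acc. kmul (ksmul (ibinom (t * int (ind S)) k) (kpow (zz S) k)) acc) fs kone"
  using assms(2) unfolding gp_def gamma_prod_def
proof (induction fs)
  case Nil then show ?case by simp
next
  case (Cons x fs)
  obtain S t k where x: "x = (S,t,k)" by (cases x) auto
  have "S \<subseteq> idx4" "S \<noteq> {}" using Cons.prems x by auto
  then show ?case using Cons x by (simp add: kx_cel[of ind, OF assms(1)] gamma_nel)
qed

lemma filt_smul: "a \<in> gamma_filt ind d \<Longrightarrow> ksmul (int n) a \<in> gamma_filt ind d"
proof (induction n)
  case 0
  have "ksmul (int 0) a = kzero" by (simp add: ksmul_def kzero_def)
  then show ?case using gamma_filt.zero by simp
next
  case (Suc n)
  have "ksmul (int (Suc n)) a = kadd (ksmul (int n) a) a" by (simp add: ksmul_def kadd_def fun_eq_iff algebra_simps)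
  then show ?case using Suc gamma_filt.add by simp
qed

lemma fin0_zz: "finite S \<Longrightarrow> fin0 (zz S)" by (auto simp: fin0_def zz_def kadd_def kneg_def xmon_def kone_def dest: finite_subset)
lemma fin0_ymon1: "fin0 (ymon {x})" by (auto simp: fin0_def ymon_def)
lemma kmul_ksmul_l: "kmul (ksmul c f) g = ksmul c (kmul f g)"
  by (simp add: kmul_def ksmul_def fun_eq_iff sum_distrib_left mult.assoc)
lemma kmul_ksmul_r: "kmul f (ksmul c g) = ksmul c (kmul f g)"
  by (simp add: kmul_def ksmul_def fun_eq_iff sum_distrib_left algebra_simps)
lemma ksmul_ksmul: "ksmul a (ksmul b f) = ksmul (a * b) f" by (simp add: ksmul_def fun_eq_iff)
lemma zz_single: "zz {x} = ymon {x}" by (auto simp: zz_def kadd_def kneg_def xmon_def kone_def ymon_def fun_eq_iff)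
lemma kpow_Suc0: "kpow u (Suc 0) = kmul u kone" by simp
lemma kpow2: "kpow u 2 = kmul u u" if "fin0 u" using that by (simp add: numeral_eq_Suc kmul_kone_right)
lemma kpow4: "kpow u 4 = kmul u (kmul u (kpow u 2))" by (simp add: numeral_eq_Suc)

lemma kmul_ymon_r: "kmul f (ymon {x}) T = (if finite T \<and> x \<in> T then f (T - {x}) else 0)"
proof (cases "finite T \<and> x \<in> T")
  case True
  have "kmul f (ymon {x}) T = (\<Sum>B\<in>Pow T. if B = T - {x} then f B else 0)"
    unfolding kmul_def ymon_def by (rule sum.cong) (use True in auto)
  also have "\<dots> = f (T - {x})" using True by (simp add: sum.delta)
  finally show ?thesis using True by simp
next
  case False
  then show ?thesis
  proof (cases "finite T")
    case True
    then have "x \<notin> T" using False by simp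
    then have "kmul f (ymon {x}) T = 0" unfolding kmul_def ymon_def by (intro sum.neutral) auto
    then show ?thesis using False by auto
  qed (simp add: kmul_inf)
qed

lemma kmul_ymon_l: "kmul (ymon {x}) f T = (if finite T \<and> x \<in> T then f (T - {x}) else 0)"
proof (cases "finite T \<and> x \<in> T")
  case True
  have "kmul (ymon {x}) f T = (\<Sum>B\<in>Pow T. if B = {x} then f (T - {x}) else 0)"
    unfolding kmul_def ymon_def by (rule sum.cong) (use True in auto)
  also have "\<dots> = f (T - {x})" using True by (simp add: sum.delta)
  finally show ?thesis using True by simp
next
  case False
  then show ?thesis
  proof (cases "finite T")
    case True
    then have "x \<notin> T" using False by simp
    then have "kmul (ymon {x}) f T = 0" unfolding kmul_def ymon_def by (intro sum.neutral) auto
    then show ?thesis using False by auto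
  qed (simp add: kmul_inf)
qed

lemma sigma_swap:
  fixes F :: "nat set \<Rightarrow> nat set \<Rightarrow> int"
  shows "(\<Sum>(A,B)\<in>Sigma (Pow T) (\<lambda>A. Pow (T - A)). F A B)
       = (\<Sum>(C,A)\<in>Sigma (Pow T) Pow. F A (C - A))"
  apply (rule sum.reindex_bij_witness[where j="\<lambda>(A,B). (A \<union> B, A)" and i="\<lambda>(C,A). (A, C - A)"])
      apply (auto simp: Diff_Un mult.assoc)
  apply (subgoal_tac "a \<union> b - a = b", simp, blast)
  done

lemma kmul_assoc: "kmul f (kmul g h) = kmul (kmul f g) h"
proof
  fix T
  show "kmul f (kmul g h) T = kmul (kmul f g) h T"
  proof (cases "finite T")
    case False then show ?thesis by (simp add: kmul_inf)
  next
    case fin: True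
    have "kmul f (kmul g h) T = (\<Sum>A\<in>Pow T. \<Sum>B\<in>Pow (T - A). f A * (g B * h (T - A - B)))"
      by (simp add: kmul_def sum_distrib_left)
    also have "\<dots> = (\<Sum>(A,B)\<in>Sigma (Pow T) (\<lambda>A. Pow (T - A)). f A * (g B * h (T - A - B)))"
      using fin by (intro sum.Sigma) auto
    also have "\<dots> = (\<Sum>(C,A)\<in>Sigma (Pow T) Pow. f A * (g (C - A) * h (T - A - (C - A))))"
      by (rule sigma_swap)
    also have "\<dots> = (\<Sum>(C,A)\<in>Sigma (Pow T) Pow. f A * g (C - A) * h (T - C))"
      by (rule sum.cong) (auto simp: mult.assoc intro!: arg_cong[where f=h])
    also have "\<dots> = (\<Sum>C\<in>Pow T. \<Sum>A\<in>Pow C. f A * g (C - A) * h (T - C))"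
      using fin by (intro sum.Sigma[symmetric]) (auto intro: finite_subset)
    also have "\<dots> = kmul (kmul f g) h T"
      by (simp add: kmul_def sum_distrib_right)
    finally show ?thesis .
  qed
qed

lemma card_mid: "finite T \<Longrightarrow> T \<noteq> {} \<Longrightarrow> card {B \<in> Pow T. B \<noteq> {} \<and> B \<noteq> T} = 2 ^ card T - 2"
proof -
  assume f: "finite T" and ne: "T \<noteq> {}"
  have "{B \<in> Pow T. B \<noteq> {} \<and> B \<noteq> T} = Pow T - {{}, T}" by auto
  moreover have "card (Pow T - {{}, T}) = card (Pow T) - card {{}, T}"
    by (rule card_Diff_subset) auto
  moreover have "card {{}, T} = 2" using ne by simp
  ultimately show ?thesis using f by (simp add: card_Pow)
qed

lemma P2_ap: "kmul (zz S) (zz S) T = (if finite T \<and> T \<subseteq> S \<and> T \<noteq> {} then 2 ^ card T - 2 else 0)"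
proof (cases "finite T")
  case False then show ?thesis by (simp add: kmul_inf)
next
  case f: True
  show ?thesis
  proof (cases "T \<subseteq> S")
    case True
    have "kmul (zz S) (zz S) T = (\<Sum>B\<in>Pow T. if B \<noteq> {} \<and> B \<noteq> T then 1 else 0)"
      unfolding kmul_def zz_ap by (rule sum.cong) (use True in auto)
    also have "\<dots> = int (card (Pow T \<inter> {B. B \<noteq> {} \<and> B \<noteq> T}))"
      using f by (simp add: sum.If_cases)
    also have "Pow T \<inter> {B. B \<noteq> {} \<and> B \<noteq> T} = {B \<in> Pow T. B \<noteq> {} \<and> B \<noteq> T}" by auto
    finally have e: "kmul (zz S) (zz S) T = int (card {B \<in> Pow T. B \<noteq> {} \<and> B \<noteq> T})" .
    show ?thesis
    proof (cases "T = {}")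
      case True then show ?thesis using e by simp
    next
      case False
      have "1 \<le> card T" using False f by (simp add: Suc_le_eq card_gt_0_iff)
      then have "(2::nat) ^ 1 \<le> 2 ^ card T" by (rule power_increasing) simp
      then have "(2::nat) \<le> 2 ^ card T" by simp
      then show ?thesis using e card_mid[OF f False] f False True by (simp add: of_nat_diff)
    qed
  next
    case False
    have "kmul (zz S) (zz S) T = 0" unfolding kmul_def zz_ap
      by (rule sum.neutral) (use False in auto)
    then show ?thesis using False by simp
  qed
qed

lemmas alg = kmul_assoc fin0_kpow kpow2 kmul_ksmul_l kmul_ksmul_r ksmul_ksmul zz_single kpow_Suc0 kpow4
  kmul_kone_right fin0_zz fin0_ymon1 fin0_kmul fin0_ksmul fin0_kone
lemmas ev2 = kmul_ymon_r kmul_ymon_l P2_ap ksmul_ap kadd_ap kneg_ap kone_ap zz_ap ymon_ap insert_Diff_if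

definition gpf :: "(nat set \<Rightarrow> nat) \<Rightarrow> (nat set \<times> int \<times> nat) list \<Rightarrow> kel" where
  "gpf ind fs = foldr (\<lambda>(S,t,k) acc. kmul (ksmul (ibinom (t * int (ind S)) k) (kpow (zz S) k)) acc) fs kone"

lemma gpf_simps: "gpf ind [] = kone" "gpf ind ((S,t,k)#fs) = kmul (ksmul (ibinom (t * int (ind S)) k) (kpow (zz S) k)) (gpf ind fs)"
  by (simp_all add: gpf_def)

lemma imres_by:
  assumes "ind {} = 1" "\<forall>(S,t,k) \<in> set fs. S \<subseteq> idx4 \<and> S \<noteq> {}" "d \<le> (\<Sum>(S,t,k)\<leftarrow>fs. k)"
    "in_GammaE (Suc d) (kadd (gpf ind fs) (kneg P))"
  shows "in_im_res ind d P"
  unfolding in_im_res_def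
proof (rule bexI)
  show "gp ind fs \<in> gamma_filt ind d" by (rule gp_mem[of ind fs d, OF assms(1-3)])
  show "in_GammaE (Suc d) (kadd (gp ind fs) (kneg P))" using assms(4) gp_eval[of ind fs, OF assms(1,2)] by (simp add: gpf_def)
qed

lemma filt_by:
  assumes "ind {} = 1" "\<forall>(S,t,k) \<in> set fs. S \<subseteq> idx4 \<and> S \<noteq> {}" "d \<le> (\<Sum>(S,t,k)\<leftarrow>fs. k)"
  shows "gpf ind fs \<in> gamma_filt ind d"
  using gp_mem[of ind fs d, OF assms(1-3)] gp_eval[of ind fs, OF assms(1,2)] by (simp add: gpf_def)

lemma ib: "ibinom 2 2 = 1" "ibinom 2 1 = 2" "ibinom 4 4 = 1" "ibinom (-4) 2 = 10" "ibinom 4 2 = 6" "ibinom 2 (Suc 0) = 2"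
  by (simp_all add: ibinom_def lessThan_Suc numeral_eq_Suc)

lemma fin0_kpow': "fin0 (kpow u k)" by (rule fin0_kpow)

lemmas evs = all_sub_insert all_sub_empty ev2 kpow2 fin0_zz kmul_empty
lemmas evs2 = evs kmul_ins




lemma trip_g:
  assumes d: "distinct [p,q,r]" and i: "ind {} = 1" "ind {r} = 2" "ind {p,q} = 2"
    and m: "p \<in> idx4" "q \<in> idx4" "r \<in> idx4"
  shows "in_im_res ind 3 (ksmul 4 (ymon {p,q,r}))"
  apply (rule imres_by[where fs="[({p,q},1,2),({r},1,1)]"])
  using i m d apply (simp_all add: gpf_simps ib alg)
  apply (rule gammaE_by_enum[where A="{p,q,r}"])
   apply (intro good_intros; simp)
  using d by (simp add: evs)

lemma trip_h:
  assumes d: "distinct [p,q,r]" and i: "ind {} = 1" "ind {p} = 2" "ind {p,q,r} = 2"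
    and m: "p \<in> idx4" "q \<in> idx4" "r \<in> idx4"
  shows "in_im_res ind 3 (ksmul 4 (ymon {p,q,r}))"
  apply (rule imres_by[where fs="[({p,q,r},1,2),({p},1,1)]"])
  using i m d apply (simp_all add: gpf_simps ib alg)
  apply (rule gammaE_by_enum[where A="{p,q,r}"])
   apply (intro good_intros; simp)
  using d by (simp add: evs)

lemma h_b:
  assumes d: "distinct [p,q,r,s]" and i: "ind {} = 1" "ind {s} = 2" "ind {p,q,r} = 2"
    and s: "idx4 = {p,q,r,s}"
  shows "in_im_res ind 3 (kadd (ksmul (-4) (ymon {p,q,r})) (ksmul 4 (esym 3)))"
proof -
  have m: "p \<in> idx4" "q \<in> idx4" "r \<in> idx4" "s \<in> idx4" "idx4 \<subseteq> {p,q,r,s}" unfolding s by auto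
  have es: "\<And>n T. esym n T = (if T \<subseteq> {p,q,r,s} \<and> card T = n then 1 else 0)" unfolding esym_def s by simp
  show ?thesis
  apply (rule imres_by[where fs="[({p,q,r},1,2),({s},1,1)]"])
  using i m d apply (simp_all add: gpf_simps ib alg)
  apply (rule gammaE_by_enum[where A="{p,q,r,s}"])
   apply (intro good_intros; use m in simp)
  using d by (simp add: evs es)
qed




lemma fin_idx4: "finite idx4" by (simp add: idx4_def)

lemma pair_h:
  assumes d: "distinct [p,q,r]" and i: "ind {} = 1" "ind {p,q,r} = 2"
    and m: "p \<in> idx4" "q \<in> idx4" "r \<in> idx4"
  shows "in_im_res ind 2 (ksmul 2 (kadd (ymon {p,q}) (kadd (ymon {p,r}) (ymon {q,r}))))"
  apply (rule imres_by[where fs="[({p,q,r},1,2)]"])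
  using i m d apply (simp_all add: gpf_simps ib alg)
  apply (rule gammaE_by_enum[where A="{p,q,r}"])
   apply (intro good_intros; simp)
  using d by (simp add: evs)

lemma d2_2:
  assumes d: "distinct [p,q,r,s]" and i: "ind {} = 1" "ind idx4 = 2"
    and s: "idx4 = {p,q,r,s}"
  shows "in_im_res ind 2 (ksmul 2 (esym 2))"
proof -
  have m: "p \<in> idx4" "q \<in> idx4" "r \<in> idx4" "s \<in> idx4" "idx4 \<subseteq> {p,q,r,s}" "idx4 \<noteq> {}" unfolding s by auto
  have es: "\<And>n T. esym n T = (if T \<subseteq> {p,q,r,s} \<and> card T = n then 1 else 0)" unfolding esym_def s by simp
  show ?thesis
  apply (rule imres_by[where fs="[(idx4,1,2)]"])
  using i m d apply (simp_all add: gpf_simps ib alg fin_idx4)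
  apply (rule gammaE_by_enum[where A="{p,q,r,s}"])
   apply (intro good_intros; use m in simp)
  using d m by (simp add: evs es fin_idx4)
qed

lemma eight_g:
  assumes d: "distinct [p,q,r,s]" and i: "ind {} = 1" "ind {p,q} = 2" "ind {r} = 2" "ind {s} = 2"
    and s: "idx4 = {p,q,r,s}"
  shows "ksmul 8 (ymon idx4) \<in> gamma_filt ind 4"
proof -
  have m: "p \<in> idx4" "q \<in> idx4" "r \<in> idx4" "s \<in> idx4" unfolding s by auto
  let ?fs = "[({p,q},1,2),({r},1,1),({s},1,1)]"
  have "gpf ind ?fs \<in> gamma_filt ind 4" using m d by (intro filt_by i) auto
  moreover have "gpf ind ?fs = ksmul 8 (ymon idx4)"
    unfolding s
    using i m d apply (simp add: gpf_simps ib alg)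
    apply (rule eq_by_enum[where A="{p,q,r,s}"])
      apply (intro good_intros; simp)+
    using d by (simp add: evs)
  ultimately show ?thesis by simp
qed

lemma eight_h:
  assumes d: "distinct [p,q,r,s]" and i: "ind {} = 1" "ind {p,q,r} = 2" "ind {p} = 2" "ind {s} = 2"
    and s: "idx4 = {p,q,r,s}"
  shows "ksmul 8 (ymon idx4) \<in> gamma_filt ind 4"
proof -
  have m: "p \<in> idx4" "q \<in> idx4" "r \<in> idx4" "s \<in> idx4" unfolding s by auto
  let ?fs = "[({p,q,r},1,2),({p},1,1),({s},1,1)]"
  have "gpf ind ?fs \<in> gamma_filt ind 4" using m d by (intro filt_by i) auto
  moreover have "gpf ind ?fs = ksmul 8 (ymon idx4)"
    unfolding s
    using i m d apply (simp add: gpf_simps ib alg)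
    apply (rule eq_by_enum[where A="{p,q,r,s}"])
      apply (intro good_intros; simp)+
    using d by (simp add: evs)
  ultimately show ?thesis by simp
qed

lemma four_J:
  assumes d: "distinct [p,q,r,s]" and i: "ind {} = 1" "ind {p,q} = 2" "ind {r,s} = 2"
    and s: "idx4 = {p,q,r,s}"
  shows "ksmul 4 (ymon idx4) \<in> gamma_filt ind 4"
proof -
  have m: "p \<in> idx4" "q \<in> idx4" "r \<in> idx4" "s \<in> idx4" unfolding s by auto
  let ?fs = "[({p,q},1,2),({r,s},1,2)]"
  have "gpf ind ?fs \<in> gamma_filt ind 4" using m d by (intro filt_by i) auto
  moreover have "gpf ind ?fs = ksmul 4 (ymon idx4)"
    unfolding s
    using i m d apply (simp add: gpf_simps ib alg)
    apply (rule eq_by_enum[where A="{p,q,r,s}"])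
      apply (intro good_intros; simp)+
    using d by (simp add: evs2)
  ultimately show ?thesis by simp
qed




lemma eight_d2:
  assumes d: "distinct [p,q,r,s]" and i: "ind {} = 1" "ind idx4 = 2" "ind {p} = 2" "ind {q} = 2"
    and s: "idx4 = {p,q,r,s}"
  shows "ksmul 8 (ymon idx4) \<in> gamma_filt ind 4"
proof -
  have m: "p \<in> idx4" "q \<in> idx4" "r \<in> idx4" "s \<in> idx4" "idx4 \<noteq> {}" unfolding s by auto
  let ?fs = "[(idx4,1,2),({p},1,1),({q},1,1)]"
  have "gpf ind ?fs \<in> gamma_filt ind 4" using m d by (intro filt_by i) auto
  moreover have "gpf ind ?fs = ksmul 8 (ymon idx4)"
    using i m d apply (simp add: gpf_simps ib alg fin_idx4)
    unfolding s
    apply (rule eq_by_enum[where A="{p,q,r,s}"])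
      apply (intro good_intros; simp)+
    using d by (simp add: evs)
  ultimately show ?thesis by simp
qed

lemma eight_d4:
  assumes d: "distinct [p,q,r,s]" and i: "ind {} = 1" "ind idx4 = 4" "ind {p,q} = 4" "ind {r,s} = 4"
    and s: "idx4 = {p,q,r,s}"
  shows "ksmul 8 (ymon idx4) \<in> gamma_filt ind 4"
proof -
  have m: "p \<in> idx4" "q \<in> idx4" "r \<in> idx4" "s \<in> idx4" "idx4 \<noteq> {}" unfolding s by auto
  let ?a = "gpf ind [(idx4,1,4)]"
  let ?b = "gpf ind [({p,q},-1,2),({r,s},-1,2)]"
  have a: "?a \<in> gamma_filt ind 4" using m d by (intro filt_by i) auto
  have b: "?b \<in> gamma_filt ind 4" using m d by (intro filt_by i) auto
  have "kadd (ksmul (int 17) ?a) (kneg ?b) = ksmul 8 (ymon idx4)"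
    using i m d apply (simp add: gpf_simps ib alg fin_idx4)
    unfolding s
    apply (rule eq_by_enum[where A="{p,q,r,s}"])
      apply (intro good_intros; simp)+
    using d by (simp add: evs2)
  moreover have "kadd (ksmul (int 17) ?a) (kneg ?b) \<in> gamma_filt ind 4"
    by (intro gamma_filt.add gamma_filt.neg filt_smul a b)
  ultimately show ?thesis by simp
qed

lemma d2_3:
  assumes d: "distinct [p,q,r,s]" and i: "ind {} = 1" "ind idx4 = 2" "ind {p} = 2" "ind {q} = 2"
     "ind {r} = 2" "ind {s} = 2"
    and s: "idx4 = {p,q,r,s}"
  shows "in_im_res ind 3 (ksmul 4 (ymon {q,r,s}))"
  unfolding in_im_res_def
proof (rule bexI)
  have m: "p \<in> idx4" "q \<in> idx4" "r \<in> idx4" "s \<in> idx4" "idx4 \<noteq> {}" unfolding s by auto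
  define W where "W x = gpf ind [(idx4,1,2),({x},1,1)]" for x
  define V where "V a b c = gpf ind [({a},1,1),({b},1,1),({c},1,1)]" for a b c
  let ?z = "kadd (kadd (kadd (W q) (W r)) (W s)) (kneg (kadd (kadd (kadd (V p q r) (V p q s)) (V p r s)) (V q r s)))"
  have w: "W x \<in> gamma_filt ind 3" if "x \<in> idx4" for x
    unfolding W_def using m that by (intro filt_by i) auto
  have v: "V a b c \<in> gamma_filt ind 3" if "a \<in> idx4" "b \<in> idx4" "c \<in> idx4" for a b c
    unfolding V_def using that by (intro filt_by i) auto
  show "?z \<in> gamma_filt ind 3"
    by (intro gamma_filt.add gamma_filt.neg w v m)
  show "in_GammaE (Suc 3) (kadd ?z (kneg (ksmul 4 (ymon {q, r, s}))))"
    unfolding W_def V_def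
    using i m d apply (simp add: gpf_simps ib alg fin_idx4)
    unfolding s
    apply (rule gammaE_by_enum[where A="{p,q,r,s}"])
     apply (intro good_intros; simp)
    using d by (simp add: evs)
qed




definition jl :: "nat set list" where "jl = [{1,2},{1,3},{1,4},{2,3},{2,4},{3,4}]"

lemma idx4_eq: "idx4 = {1,2,3,4}" by (simp add: idx4_def)

lemma jl_distinct: "distinct jl" by (simp add: jl_def set_eq_subset)

lemma Jset_eq: "Jset = set jl"
proof -
  have a: "\<forall>P. P \<subseteq> {1,2,3,4::nat} \<longrightarrow> card P = 2 \<longrightarrow> P \<in> set jl"
    by (simp only: all_sub_insert all_sub_empty) (simp add: jl_def)
  have b: "\<forall>P \<in> set jl. P \<subseteq> {1,2,3,4} \<and> card P = 2" by (simp add: jl_def)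
  show ?thesis unfolding Jset_def idx4_eq using a b by blast
qed

lemma trip_enum: "T \<subseteq> idx4 \<Longrightarrow> card T = 3 \<Longrightarrow> T = {1,2,3} \<or> T = {1,2,4} \<or> T = {1,3,4} \<or> T = {2,3,4}"
proof -
  have "\<forall>T. T \<subseteq> {1,2,3,4::nat} \<longrightarrow> card T = 3 \<longrightarrow> T = {1,2,3} \<or> T = {1,2,4} \<or> T = {1,3,4} \<or> T = {2,3,4}"
    by (simp only: all_sub_insert all_sub_empty) simp
  then show "T \<subseteq> idx4 \<Longrightarrow> card T = 3 \<Longrightarrow> ?thesis" unfolding idx4_eq by blast
qed

lemma card_filt: "distinct ys \<Longrightarrow> card {P \<in> set ys. Q P} = length (filter Q ys)"
proof -
  assume "distinct ys"
  then have "card (set (filter Q ys)) = length (filter Q ys)" by (intro distinct_card) simp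
  moreover have "set (filter Q ys) = {P \<in> set ys. Q P}" by auto
  ultimately show ?thesis by simp
qed

lemma cardG: "card (Gset ind) = length (filter (\<lambda>P. ind P = 2) jl)"
proof -
  have "Gset ind = {P \<in> set jl. ind P = 2}" by (simp add: Gset_def Jset_eq)
  then show ?thesis using card_filt[OF jl_distinct] by simp
qed

lemma cardGJ: "m \<in> {1,2,3} \<Longrightarrow> card (Gset ind \<inter> Jm m) = length (filter (\<lambda>P. ind P = 2) (if m = 1 then [{1,2},{3,4}] else if m = 2 then [{1,3},{2,4}] else [{1,4},{2,3}]))"
proof -
  assume m: "m \<in> {1,2,3}"
  define ys :: "nat set list" where "ys = (if m = 1 then [{1,2},{3,4}] else if m = 2 then [{1,3},{2,4}] else [{1,4},{2,3}])"
  have "Jm m = set ys" "set ys \<subseteq> set jl" "distinct ys" using m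
    by (auto simp: Jm_def J1_def J2_def J3_def ys_def jl_def set_eq_subset)
  then have "Gset ind \<inter> Jm m = {P \<in> set ys. ind P = 2}" by (auto simp: Gset_def Jset_eq)
  then show ?thesis using card_filt[OF \<open>distinct ys\<close>] ys_def by simp
qed

lemma cardGK: "card (Gset ind \<inter> Kset i) = length (filter (\<lambda>P. ind P = 2 \<and> i \<notin> P) jl)"
proof -
  have "Gset ind \<inter> Kset i = {P \<in> set jl. ind P = 2 \<and> i \<notin> P}" by (auto simp: Gset_def Kset_def Jset_eq)
  then show ?thesis using card_filt[OF jl_distinct] by simp
qed

lemma G_cover:
  assumes "4 \<le> card (Gset ind) \<or> (\<exists>m\<in>{1,2,3}. card (Gset ind \<inter> Jm m) = 2) \<or> (\<exists>i'\<in>idx4. card (Gset ind \<inter> Kset i') = 3)"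
  shows "(ind {1,2} = 2 \<or> ind {1,3} = 2 \<or> ind {2,3} = 2) \<and> (ind {1,2} = 2 \<or> ind {1,4} = 2 \<or> ind {2,4} = 2) \<and>
         (ind {1,3} = 2 \<or> ind {1,4} = 2 \<or> ind {3,4} = 2) \<and> (ind {2,3} = 2 \<or> ind {2,4} = 2 \<or> ind {3,4} = 2)"
  using assms unfolding cardG cardGK idx4_eq
  by (auto simp: cardGJ jl_def split: if_splits)




lemma pair24:
  assumes quat: "quat_index_data ind" and ge2: "\<forall>S \<subseteq> idx4. 2 \<le> card S \<longrightarrow> 2 \<le> ind S"
    and S: "S \<subseteq> idx4" "card S = 2"
  shows "ind S = 2 \<or> ind S = 4"
proof -
  obtain e where e: "ind S = 2 ^ e" and dv: "ind S dvd 2 ^ card S" using quat S unfolding quat_index_data_def by blast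
  have "2 ^ e dvd (2::nat) ^ 2" using e dv S by simp
  then have "e \<le> 2" by (rule power_dvd_imp_le) simp
  moreover have "2 \<le> ind S" using ge2 S by simp
  then have "e \<noteq> 0" using e by (cases e) auto
  ultimately have "e = 1 \<or> e = 2" by auto
  then show ?thesis using e by auto
qed

lemma trip_any:
  assumes d: "distinct [a,b,c]" and i: "ind {} = 1" "ind {a} = 2" "ind {b} = 2" "ind {c} = 2"
    and m: "a \<in> idx4" "b \<in> idx4" "c \<in> idx4"
    and g: "ind {a,b} = 2 \<or> ind {a,c} = 2 \<or> ind {b,c} = 2"
  shows "in_im_res ind 3 (ksmul 4 (ymon {a,b,c}))"
proof -
  have e1: "{a,c,b} = {a,b,c}" "{b,c,a} = {a,b,c}" by auto
  show ?thesis using g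
  proof (elim disjE)
    assume "ind {a,b} = 2" then show ?thesis using trip_g[of a b c ind] d i m by simp
  next
    assume "ind {a,c} = 2" then show ?thesis using trip_g[of a c b ind] d i m e1 by simp
  next
    assume "ind {b,c} = 2" then show ?thesis using trip_g[of b c a ind] d i m e1 by simp
  qed
qed

lemma eight_any_g:
  assumes i: "ind {} = 1" "ind {1} = 2" "ind {2} = 2" "ind {3} = 2" "ind {4} = 2"
    and g: "ind {1,2} = 2 \<or> ind {1,3} = 2 \<or> ind {1,4} = 2 \<or> ind {2,3} = 2 \<or> ind {2,4} = 2 \<or> ind {3,4} = 2"
  shows "ksmul 8 (ymon idx4) \<in> gamma_filt ind 4"
  using g
proof (elim disjE)
  assume "ind {1,2} = 2" then show ?thesis using eight_g[of 1 2 3 4 ind] i by (simp add: idx4_eq)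
next
  assume "ind {1,3} = 2" then show ?thesis using eight_g[of 1 3 2 4 ind] i by (simp add: idx4_eq insert_commute)
next
  assume "ind {1,4} = 2" then show ?thesis using eight_g[of 1 4 2 3 ind] i by (simp add: idx4_eq insert_commute)
next
  assume "ind {2,3} = 2" then show ?thesis using eight_g[of 2 3 1 4 ind] i by (simp add: idx4_eq insert_commute)
next
  assume "ind {2,4} = 2" then show ?thesis using eight_g[of 2 4 1 3 ind] i by (simp add: idx4_eq insert_commute)
next
  assume "ind {3,4} = 2" then show ?thesis using eight_g[of 3 4 1 2 ind] i by (simp add: idx4_eq insert_commute)
qed



theorem lemma4p5:
  fixes ind :: "nat set \<Rightarrow> nat" and i j k l :: nat
  assumes quat: "quat_index_data ind"
    and ge2: "\<forall>S \<subseteq> idx4. 2 \<le> card S \<longrightarrow> 2 \<le> ind S"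
    and ijkl: "distinct [i, j, k, l]" "{i, j, k, l} = idx4"
  shows
    \<comment> \<open>(1)\<close>
    "(ind idx4 = 2 \<longrightarrow> in_im_res ind 2 (ksmul 2 (esym 2)))
   \<and> (ind (idx4 - {l}) = 2 \<longrightarrow>
        in_im_res ind 2 (ksmul 2 (kadd (ymon {i, j}) (kadd (ymon {i, k}) (ymon {j, k})))))
    \<comment> \<open>(2)\<close>
   \<and> (ind {i, j} = 2 \<longrightarrow>
        in_im_res ind 3 (ksmul 4 (ymon {i, j, k})) \<and> in_im_res ind 3 (ksmul 4 (ymon {i, j, l})))
   \<and> (ind (idx4 - {l}) = 2 \<longrightarrow>
        in_im_res ind 3 (ksmul 4 (ymon {i, j, k})) \<and>
        in_im_res ind 3 (kadd (ksmul (-4) (ymon {i, j, k})) (ksmul 4 (esym 3))))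
   \<and> (ind {i, j} = 2 \<and> ind {i, k} = 2 \<longrightarrow>
        in_im_res ind 3 (ksmul 4 (ymon {i, j, k})) \<and> in_im_res ind 3 (ksmul 4 (ymon {i, j, l})) \<and>
        in_im_res ind 3 (ksmul 4 (ymon {i, k, l})))
   \<and> ((ind idx4 = 2 \<or> 4 \<le> card (Gset ind) \<or>
        (\<exists>m \<in> {1, 2, 3}. card (Gset ind \<inter> Jm m) = 2) \<or>
        (\<exists>i' \<in> idx4. card (Gset ind \<inter> Kset i') = 3)) \<longrightarrow>
        (\<forall>T \<subseteq> idx4. card T = 3 \<longrightarrow> in_im_res ind 3 (ksmul 4 (ymon T))))
    \<comment> \<open>(3)\<close>
   \<and> ((ind idx4 \<in> {2, 4} \<or> 1 \<le> card (Gset ind) \<or> 1 \<le> card (Hset ind 2)) \<longrightarrow>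
        ksmul 8 (ymon idx4) \<in> gamma_filt ind 4)
   \<and> ((\<exists>m \<in> {1, 2, 3}. card (Gset ind \<inter> Jm m) = 2) \<longrightarrow>
        ksmul 4 (ymon idx4) \<in> gamma_filt ind 4)"
proof -
  have q0: "ind {} = 1" using quat unfolding quat_index_data_def by simp
  have q1: "\<And>x. x \<in> idx4 \<Longrightarrow> ind {x} = 2" using quat unfolding quat_index_data_def by simp
  have s: "idx4 = {i,j,k,l}" using ijkl(2) by simp
  have d4: "distinct [i,j,k,l]" using ijkl(1) .
  have mi: "i \<in> idx4" "j \<in> idx4" "k \<in> idx4" "l \<in> idx4" unfolding s by auto
  have n: "ind {1} = 2" "ind {2} = 2" "ind {3} = 2" "ind {4} = 2" using q1 by (auto simp: idx4_eq)
  have ii: "ind {i} = 2" "ind {j} = 2" "ind {k} = 2" "ind {l} = 2" using q1 mi by auto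
  have dl: "idx4 - {l} = {i,j,k}" using d4 unfolding s by auto
  have P1a: "ind idx4 = 2 \<longrightarrow> in_im_res ind 2 (ksmul 2 (esym 2))"
    using d2_2[of i j k l ind] d4 q0 s by simp
  have P1b: "ind (idx4 - {l}) = 2 \<longrightarrow>
        in_im_res ind 2 (ksmul 2 (kadd (ymon {i, j}) (kadd (ymon {i, k}) (ymon {j, k}))))"
    using pair_h[of i j k ind] d4 q0 mi dl by simp
  have P2a: "ind {i, j} = 2 \<longrightarrow>
        in_im_res ind 3 (ksmul 4 (ymon {i, j, k})) \<and> in_im_res ind 3 (ksmul 4 (ymon {i, j, l}))"
    using trip_g[of i j k ind] trip_g[of i j l ind] d4 q0 mi ii by simp
  have P2b: "ind (idx4 - {l}) = 2 \<longrightarrow>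
        in_im_res ind 3 (ksmul 4 (ymon {i, j, k})) \<and>
        in_im_res ind 3 (kadd (ksmul (-4) (ymon {i, j, k})) (ksmul 4 (esym 3)))"
    using trip_h[of i j k ind] h_b[of i j k l ind] d4 q0 mi ii dl s by simp
  have P2c: "ind {i, j} = 2 \<and> ind {i, k} = 2 \<longrightarrow>
        in_im_res ind 3 (ksmul 4 (ymon {i, j, k})) \<and> in_im_res ind 3 (ksmul 4 (ymon {i, j, l})) \<and>
        in_im_res ind 3 (ksmul 4 (ymon {i, k, l}))"
    using trip_g[of i j k ind] trip_g[of i j l ind] trip_g[of i k l ind] d4 q0 mi ii by simp
  have P2d: "(ind idx4 = 2 \<or> 4 \<le> card (Gset ind) \<or>
        (\<exists>m \<in> {1, 2, 3}. card (Gset ind \<inter> Jm m) = 2) \<or>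
        (\<exists>i' \<in> idx4. card (Gset ind \<inter> Kset i') = 3)) \<longrightarrow>
        (\<forall>T \<subseteq> idx4. card T = 3 \<longrightarrow> in_im_res ind 3 (ksmul 4 (ymon T)))"
  proof (intro impI allI)
    assume H: "ind idx4 = 2 \<or> 4 \<le> card (Gset ind) \<or>
        (\<exists>m \<in> {1, 2, 3}. card (Gset ind \<inter> Jm m) = 2) \<or>
        (\<exists>i' \<in> idx4. card (Gset ind \<inter> Kset i') = 3)"
    fix T assume T: "T \<subseteq> idx4" "card T = 3"
    have m4: "(1::nat) \<in> idx4" "(2::nat) \<in> idx4" "(3::nat) \<in> idx4" "(4::nat) \<in> idx4" by (auto simp: idx4_eq)
    have all: "in_im_res ind 3 (ksmul 4 (ymon {1,2,3})) \<and> in_im_res ind 3 (ksmul 4 (ymon {1,2,4})) \<and>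
       in_im_res ind 3 (ksmul 4 (ymon {1,3,4})) \<and> in_im_res ind 3 (ksmul 4 (ymon {2,3,4}))"
    proof (cases "ind idx4 = 2")
      case True
      have e: "idx4 = {1,2,3,4}" "idx4 = {2,1,3,4}" "idx4 = {3,1,2,4}" "idx4 = {4,1,2,3}" by (auto simp: idx4_eq)
      show ?thesis
        using d2_3[of 1 2 3 4 ind] d2_3[of 2 1 3 4 ind] d2_3[of 3 1 2 4 ind] d2_3[of 4 1 2 3 ind]
          True q0 n e by simp
    next
      case False
      then have G: "(ind {1,2} = 2 \<or> ind {1,3} = 2 \<or> ind {2,3} = 2) \<and> (ind {1,2} = 2 \<or> ind {1,4} = 2 \<or> ind {2,4} = 2) \<and>
         (ind {1,3} = 2 \<or> ind {1,4} = 2 \<or> ind {3,4} = 2) \<and> (ind {2,3} = 2 \<or> ind {2,4} = 2 \<or> ind {3,4} = 2)"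
        using H by (intro G_cover) auto
      show ?thesis
        using trip_any[of 1 2 3 ind] trip_any[of 1 2 4 ind] trip_any[of 1 3 4 ind] trip_any[of 2 3 4 ind]
          G q0 n m4 by simp
    qed
    show "in_im_res ind 3 (ksmul 4 (ymon T))" using trip_enum[OF T] all by auto
  qed
  have P3a: "(ind idx4 \<in> {2, 4} \<or> 1 \<le> card (Gset ind) \<or> 1 \<le> card (Hset ind 2)) \<longrightarrow>
        ksmul 8 (ymon idx4) \<in> gamma_filt ind 4"
  proof
    assume H: "ind idx4 \<in> {2, 4} \<or> 1 \<le> card (Gset ind) \<or> 1 \<le> card (Hset ind 2)"
    show "ksmul 8 (ymon idx4) \<in> gamma_filt ind 4"
    proof (cases "ind {1,2} = 2 \<or> ind {1,3} = 2 \<or> ind {1,4} = 2 \<or> ind {2,3} = 2 \<or> ind {2,4} = 2 \<or> ind {3,4} = 2")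
      case True then show ?thesis using eight_any_g[of ind] q0 n by simp
    next
      case ng: False
      then have c0: "card (Gset ind) = 0" unfolding cardG by (simp add: jl_def)
      have e: "idx4 = {1,2,3,4}" "idx4 = {2,3,4,1}" "idx4 = {1,3,4,2}" "idx4 = {1,2,4,3}" by (auto simp: idx4_eq)
      consider "ind idx4 = 2" | "ind idx4 = 4" | "1 \<le> card (Hset ind 2)" using H c0 by auto
      then show ?thesis
      proof cases
        case 1 then show ?thesis using eight_d2[of 1 2 3 4 ind] q0 n e by simp
      next
        case 2
        have "ind {1,2} = 2 \<or> ind {1,2} = 4" by (rule pair24[OF quat ge2]) (auto simp: idx4_eq)
        moreover have "ind {3,4} = 2 \<or> ind {3,4} = 4" by (rule pair24[OF quat ge2]) (auto simp: idx4_eq)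
        ultimately have "ind {1,2} = 4" "ind {3,4} = 4" using ng by auto
        then show ?thesis using eight_d4[of 1 2 3 4 ind] q0 2 e by simp
      next
        case 3
        then have "Hset ind 2 \<noteq> {}" by auto
        then obtain i' where i': "i' \<in> idx4" "ind (idx4 - {i'}) = 2" unfolding Hset_def by auto
        have "i' = 1 \<or> i' = 2 \<or> i' = 3 \<or> i' = 4" using i'(1) by (simp add: idx4_eq)
        moreover have "idx4 - {1} = {2,3,4}" "idx4 - {2} = {1,3,4}" "idx4 - {3} = {1,2,4}" "idx4 - {4} = {1,2,3}"
          by (auto simp: idx4_eq)
        ultimately consider "ind {2,3,4} = 2" | "ind {1,3,4} = 2" | "ind {1,2,4} = 2" | "ind {1,2,3} = 2"
          using i'(2) by fastforce
        then show ?thesis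
        proof cases
          case 1 then show ?thesis using eight_h[of 2 3 4 1 ind] q0 n e(2) by simp
        next
          case 2 then show ?thesis using eight_h[of 1 3 4 2 ind] q0 n e(3) by simp
        next
          case 3 then show ?thesis using eight_h[of 1 2 4 3 ind] q0 n e(4) by simp
        next
          case 4 then show ?thesis using eight_h[of 1 2 3 4 ind] q0 n e(1) by simp
        qed
      qed
    qed
  qed
  have P3b: "(\<exists>m \<in> {1, 2, 3}. card (Gset ind \<inter> Jm m) = 2) \<longrightarrow>
        ksmul 4 (ymon idx4) \<in> gamma_filt ind 4"
  proof
    assume "\<exists>m \<in> {1, 2, 3}. card (Gset ind \<inter> Jm m) = 2"
    then obtain m where m: "m \<in> {1,2,3}" "card (Gset ind \<inter> Jm m) = 2" by blast
    have e: "idx4 = {1,2,3,4}" "idx4 = {1,3,2,4}" "idx4 = {1,4,2,3}" by (auto simp: idx4_eq)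
    have "(ind {1,2} = 2 \<and> ind {3,4} = 2) \<or> (ind {1,3} = 2 \<and> ind {2,4} = 2) \<or> (ind {1,4} = 2 \<and> ind {2,3} = 2)"
      using m cardGJ[OF m(1), of ind] by (auto split: if_splits)
    then show "ksmul 4 (ymon idx4) \<in> gamma_filt ind 4"
      using four_J[of 1 2 3 4 ind] four_J[of 1 3 2 4 ind] four_J[of 1 4 2 3 ind] q0 e by auto
  qed
  show ?thesis using P1a P1b P2a P2b P2c P2d P3a P3b by blast
qed


end
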